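(* Let $I=[0,1]$ and $f_{1,\infty}$ a sequence of continuous self-maps of $I$. If $(I,f_{1,\infty})$ is weakly mixing of order $3$, then $(\mathcal{M}(I),\widetilde{f}_{1,\infty})$ is weakly mixing of all orders.
   Context: For $f_{1,\infty}=\{f_n\}_{n\ge1}$ write $f_1^n=f_n\circ\cdots\circ f_1$. $\mathcal{M}(I)$ is the space of Borel probability measures on $I$ with the weak$^*$ topology, and $\widetilde{f}_1^n(\mu)(A)=\mu((f_1^n)^{-1}(A))$ for Borel $A$. A non-autonomous system $(Y,g_{1,\infty})$ is weakly mixing of order $m$ ($m\ge2$) if for any non-empty open sets $U_1,\dots,U_m,V_1,\dots,V_m\subseteq Y$ there is $n\in\mathbb{N}$ with $g_1^n(U_i)\cap V_i\neq\emptyset$ for all $1\le i\le m$; weakly mixing of all orders means weakly mixing of order $m$ for every $m\ge2$. *)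

theory Defs
  imports "HOL-Probability.Probability"
begin

text \<open>Composition f_1^n = f_n o ... o f_1 (with f_1^0 = id); the sequence is f 1, f 2, ...\<close>
fun iter_comp :: "(nat \<Rightarrow> 'a \<Rightarrow> 'a) \<Rightarrow> nat \<Rightarrow> 'a \<Rightarrow> 'a" where
  "iter_comp f 0 = id"
| "iter_comp f (Suc n) = f (Suc n) \<circ> iter_comp f n"

text \<open>Weak mixing of order m for a non-autonomous system on topology X, given by g_1^n = G n.\<close>
definition weakly_mixing_order :: "'a topology \<Rightarrow> (nat \<Rightarrow> 'a \<Rightarrow> 'a) \<Rightarrow> nat \<Rightarrow> bool" where
  "weakly_mixing_order X G m \<longleftrightarrow>
     (\<forall>U V :: nat \<Rightarrow> 'a set.
        (\<forall>i<m. openin X (U i) \<and> U i \<noteq> {} \<and> openin X (V i) \<and> V i \<noteq> {}) \<longrightarrow>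
        (\<exists>n\<ge>1. \<forall>i<m. G n ` (U i) \<inter> V i \<noteq> {}))"

definition weakly_mixing_all_orders :: "'a topology \<Rightarrow> (nat \<Rightarrow> 'a \<Rightarrow> 'a) \<Rightarrow> bool" where
  "weakly_mixing_all_orders X G \<longleftrightarrow> (\<forall>m\<ge>2. weakly_mixing_order X G m)"

definition borel_I :: "real measure" where
  "borel_I = restrict_space borel {0..1}"

definition prob_measures_I :: "real measure set" where
  "prob_measures_I = {\<mu>. prob_space \<mu> \<and> sets \<mu> = sets borel_I}"

definition weak_star_topology_I :: "real measure topology" where
  "weak_star_topology_I = topology_generated_by
     {{\<mu> \<in> prob_measures_I. (\<integral>x. \<phi> x \<partial>\<mu>) \<in> W} | (\<phi> :: real \<Rightarrow> real) (W :: real set).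
        continuous_on {0..1} \<phi> \<and> open W}"

definition induced_map :: "(real \<Rightarrow> real) \<Rightarrow> real measure \<Rightarrow> real measure" where
  "induced_map h \<mu> = distr \<mu> borel_I h"

end

theory Submission
  imports Defs
begin


definition nbhd_ok :: "real measure set \<Rightarrow> real measure \<Rightarrow> bool" where
  "nbhd_ok Q \<mu> \<longleftrightarrow> (\<exists>(F::(real\<Rightarrow>real) set) (r::real). finite F \<and> (\<forall>\<phi>\<in>F. continuous_on {0..1} \<phi>) \<and> r > 0 \<and>
     (\<forall>\<nu>\<in>prob_measures_I. (\<forall>\<phi>\<in>F. \<bar>(\<integral>x. \<phi> x \<partial>\<nu>) - (\<integral>x. \<phi> x \<partial>\<mu>)\<bar> < r) \<longrightarrow> \<nu> \<in> Q))"

lemma nbhd_ok_mono: "nbhd_ok Q \<mu> \<Longrightarrow> Q \<subseteq> Q' \<Longrightarrow> nbhd_ok Q' \<mu>"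
  unfolding nbhd_ok_def by (meson subsetD)

lemma gen_nbhd:
  assumes "generate_topology_on {{\<mu> \<in> prob_measures_I. (\<integral>x. \<phi> x \<partial>\<mu>) \<in> W} | (\<phi> :: real \<Rightarrow> real) (W :: real set).
        continuous_on {0..1} \<phi> \<and> open W} Q"
  shows "Q \<subseteq> prob_measures_I \<and> (\<forall>\<mu>\<in>Q. nbhd_ok Q \<mu>)"
  using assms
proof (induction rule: generate_topology_on.induct)
  case Empty
  then show ?case by auto
next
  case (Int a b)
  have "nbhd_ok (a \<inter> b) \<mu>" if "\<mu> \<in> a" "\<mu> \<in> b" for \<mu>
  proof -
    have na: "nbhd_ok a \<mu>" using Int.IH(1) that(1) by simp
    have nb: "nbhd_ok b \<mu>" using Int.IH(2) that(2) by simp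
    obtain F1 :: "(real\<Rightarrow>real) set" and r1 :: real where 1: "finite F1" "\<forall>\<phi>\<in>F1. continuous_on {0..1} \<phi>" "r1 > 0"
     "\<forall>\<nu>\<in>prob_measures_I. (\<forall>\<phi>\<in>F1. \<bar>(\<integral>x. \<phi> x \<partial>\<nu>) - (\<integral>x. \<phi> x \<partial>\<mu>)\<bar> < r1) \<longrightarrow> \<nu> \<in> a"
      using na unfolding nbhd_ok_def by blast
    obtain F2 :: "(real\<Rightarrow>real) set" and r2 :: real where 2: "finite F2" "\<forall>\<phi>\<in>F2. continuous_on {0..1} \<phi>" "r2 > 0"
     "\<forall>\<nu>\<in>prob_measures_I. (\<forall>\<phi>\<in>F2. \<bar>(\<integral>x. \<phi> x \<partial>\<nu>) - (\<integral>x. \<phi> x \<partial>\<mu>)\<bar> < r2) \<longrightarrow> \<nu> \<in> b"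
      using nb unfolding nbhd_ok_def by blast
    have "\<forall>\<nu>\<in>prob_measures_I. (\<forall>\<phi>\<in>F1 \<union> F2. \<bar>(\<integral>x. \<phi> x \<partial>\<nu>) - (\<integral>x. \<phi> x \<partial>\<mu>)\<bar> < min r1 r2) \<longrightarrow> \<nu> \<in> a \<inter> b"
    proof (intro ballI impI)
      fix \<nu> assume n: "\<nu> \<in> prob_measures_I" and h: "\<forall>\<phi>\<in>F1 \<union> F2. \<bar>(\<integral>x. \<phi> x \<partial>\<nu>) - (\<integral>x. \<phi> x \<partial>\<mu>)\<bar> < min r1 r2"
      have "\<nu> \<in> a" using 1(4) n h by simp
      moreover have "\<nu> \<in> b" using 2(4) n h by simp
      ultimately show "\<nu> \<in> a \<inter> b" by simp
    qed
    moreover have "finite (F1 \<union> F2)" "\<forall>\<phi>\<in>F1 \<union> F2. continuous_on {0..1} \<phi>" "min r1 r2 > 0"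
      using 1 2 by auto
    ultimately show ?thesis unfolding nbhd_ok_def
      by (intro exI[of _ "F1 \<union> F2"] exI[of _ "min r1 r2"] conjI) simp_all
  qed
  then show ?case using Int by auto
next
  case (UN K)
  have "\<Union>K \<subseteq> prob_measures_I" using UN.IH by blast
  moreover have "nbhd_ok (\<Union>K) \<mu>" if mu: "\<mu> \<in> \<Union>K" for \<mu>
  proof -
    obtain k where "k \<in> K" "\<mu> \<in> k" using mu by blast
    then have "nbhd_ok k \<mu>" using UN.IH by blast
    then show ?thesis by (rule nbhd_ok_mono) (use \<open>k \<in> K\<close> in blast)
  qed
  ultimately show ?case by blast
next
  case (Basis s)
  then obtain \<phi> :: "real \<Rightarrow> real" and W :: "real set" where s: "s = {\<mu> \<in> prob_measures_I. (\<integral>x. \<phi> x \<partial>\<mu>) \<in> W}"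
    "continuous_on {0..1} \<phi>" "open W" by blast
  have "nbhd_ok s \<mu>" if mu: "\<mu> \<in> s" for \<mu>
  proof -
    have "(\<integral>x. \<phi> x \<partial>\<mu>) \<in> W" using mu s(1) by blast
    then obtain r where r: "r > 0" "ball (\<integral>x. \<phi> x \<partial>\<mu>) r \<subseteq> W"
      using s(3) open_contains_ball by blast
    have "\<forall>\<nu>\<in>prob_measures_I. (\<forall>\<phi>'\<in>{\<phi>}. \<bar>(\<integral>x. \<phi>' x \<partial>\<nu>) - (\<integral>x. \<phi>' x \<partial>\<mu>)\<bar> < r) \<longrightarrow> \<nu> \<in> s"
    proof (intro ballI impI)
      fix \<nu> assume n: "\<nu> \<in> prob_measures_I" and h: "\<forall>\<phi>'\<in>{\<phi>}. \<bar>(\<integral>x. \<phi>' x \<partial>\<nu>) - (\<integral>x. \<phi>' x \<partial>\<mu>)\<bar> < r"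
      then have "(\<integral>x. \<phi> x \<partial>\<nu>) \<in> ball (\<integral>x. \<phi> x \<partial>\<mu>) r"
        by (simp add: dist_real_def abs_minus_commute)
      then have "(\<integral>x. \<phi> x \<partial>\<nu>) \<in> W" using r(2) by blast
      then show "\<nu> \<in> s" using n s(1) by blast
    qed
    moreover have "finite {\<phi>}" "\<forall>\<phi>'\<in>{\<phi>}. continuous_on {0..1} \<phi>'" using s(2) by auto
    ultimately show ?thesis unfolding nbhd_ok_def using r(1)
      by (intro exI[of _ "{\<phi>}"] exI[of _ r] conjI) simp_all
  qed
  moreover have "s \<subseteq> prob_measures_I" using s(1) by blast
  ultimately show ?case by blast
qed

lemma weak_open_nbhd:
  assumes "openin weak_star_topology_I Q" "\<mu> \<in> Q"
  shows "\<mu> \<in> prob_measures_I" "nbhd_ok Q \<mu>"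
proof -
  have g: "generate_topology_on {{\<mu> \<in> prob_measures_I. (\<integral>x. \<phi> x \<partial>\<mu>) \<in> W} | (\<phi> :: real \<Rightarrow> real) (W :: real set).
        continuous_on {0..1} \<phi> \<and> open W} Q"
    using assms(1) unfolding weak_star_topology_I_def by (rule openin_topology_generated_by)
  from gen_nbhd[OF g] assms(2) show "\<mu> \<in> prob_measures_I" "nbhd_ok Q \<mu>" by blast+
qed




context
  fixes f :: "nat \<Rightarrow> real \<Rightarrow> real"
  assumes cont: "\<And>n. continuous_on {0..1} (f n)"
    and self: "\<And>n. f n ` {0..1} \<subseteq> {0..1}"
begin

lemma G_props: "continuous_on {0..1} (iter_comp f n) \<and> iter_comp f n ` {0..1} \<subseteq> {0..1}"
proof (induction n)
  case 0
  then show ?case by (simp add: continuous_on_id)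
next
  case (Suc n)
  have c: "continuous_on {0..1} (f (Suc n) \<circ> iter_comp f n)"
    by (rule continuous_on_compose) (use Suc cont continuous_on_subset in blast)+
  have "(f (Suc n) \<circ> iter_comp f n) ` {0..1} \<subseteq> {0..1}"
  proof -
    have "\<forall>x\<in>{0..1}. iter_comp f n x \<in> {0..1}" using Suc by blast
    then have "\<forall>x\<in>{0..1}. f (Suc n) (iter_comp f n x) \<in> {0..1}" using self by blast
    then show ?thesis by auto
  qed
  with c show ?case by simp
qed

lemma G_cont: "continuous_on {0..1} (iter_comp f n)" using G_props by blast
lemma G_self: "x \<in> {0..1} \<Longrightarrow> iter_comp f n x \<in> {0..1}" using G_props by blast

lemma G_img_mono:
  assumes "iter_comp f k ` W \<subseteq> iter_comp f k ` U" "k \<le> n"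
  shows "iter_comp f n ` W \<subseteq> iter_comp f n ` U"
  using assms(2)
proof (induction n rule: dec_induct)
  case base
  then show ?case using assms(1) .
next
  case (step m)
  have "iter_comp f (Suc m) ` W = f (Suc m) ` (iter_comp f m ` W)" by (simp add: image_comp)
  also have "\<dots> \<subseteq> f (Suc m) ` (iter_comp f m ` U)" using step.IH by (rule image_mono)
  also have "\<dots> = iter_comp f (Suc m) ` U" by (simp add: image_comp)
  finally show ?case .
qed

lemma small_ball:
  fixes x :: real
  assumes "x \<in> {0..1}"
  shows "\<exists>\<delta>>0. \<forall>k\<le>N. \<forall>y\<in>{0..1}. dist y x < \<delta> \<longrightarrow> dist (iter_comp f k y) (iter_comp f k x) < 1/4"
proof (induction N)
  case 0
  then show ?case by (intro exI[of _ "1/4"]) auto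
next
  case (Suc N)
  then obtain \<delta>1 where d1: "\<delta>1 > 0" "\<forall>k\<le>N. \<forall>y\<in>{0..1}. dist y x < \<delta>1 \<longrightarrow> dist (iter_comp f k y) (iter_comp f k x) < 1/4"
    by blast
  have "continuous (at x within {0..1}) (iter_comp f (Suc N))"
    using G_cont assms continuous_on_eq_continuous_within by blast
  then obtain \<delta>2 where d2: "\<delta>2 > 0" "\<forall>y\<in>{0..1}. dist y x < \<delta>2 \<longrightarrow> dist (iter_comp f (Suc N) y) (iter_comp f (Suc N) x) < 1/4"
    unfolding continuous_within_eps_delta by (meson zero_less_divide_1_iff zero_less_numeral)
  show ?case
  proof (intro exI[of _ "min \<delta>1 \<delta>2"] conjI allI impI ballI)
    show "0 < min \<delta>1 \<delta>2" using d1 d2 by simp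
    fix k y assume k: "k \<le> Suc N" and y: "y \<in> {0..1}" "dist y x < min \<delta>1 \<delta>2"
    show "dist (iter_comp f k y) (iter_comp f k x) < 1/4"
    proof (cases "k = Suc N")
      case True then show ?thesis using d2 y by simp
    next
      case False then show ?thesis using d1 y k by simp
    qed
  qed
qed


lemma cover1:
  assumes wm3: "weakly_mixing_order (top_of_set {0..1}) (iter_comp f) 3"
   and W: "openin (top_of_set {0..1}) W" "W \<noteq> {}"
   and U: "openin (top_of_set {0..1}) U" "U \<noteq> {}"
   and V: "openin (top_of_set {0..1}) V" "V \<noteq> {}"
   and e: "0 < \<epsilon>" "\<epsilon> < 1/4"
  shows "\<exists>n>N. {\<epsilon>..1-\<epsilon>} \<subseteq> iter_comp f n ` W \<and> iter_comp f n ` U \<inter> V \<noteq> {}"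
proof -
  obtain x where x: "x \<in> W" using W(2) by blast
  have xI: "x \<in> {0..1}" using W(1) x openin_imp_subset by blast
  obtain \<delta>0 where d0: "\<delta>0>0" "\<forall>x'\<in>{0..1}. dist x' x < \<delta>0 \<longrightarrow> x' \<in> W"
    using W(1) x unfolding openin_euclidean_subtopology_iff by blast
  obtain \<delta>1 where d1: "\<delta>1 > 0" "\<forall>k\<le>N. \<forall>y\<in>{0..1}. dist y x < \<delta>1 \<longrightarrow> dist (iter_comp f k y) (iter_comp f k x) < 1/4"
    using small_ball[OF xI, of N] by blast
  define \<delta> where "\<delta> = min \<delta>0 \<delta>1"
  define J where "J = {0..1} \<inter> ball x \<delta>"
  have J_open: "openin (top_of_set {0..1}) J" unfolding J_def by (rule openin_open_Int) simp
  have xJ: "x \<in> J" using d0 d1 xI by (simp add: J_def \<delta>_def)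
  have JW: "J \<subseteq> W" using d0 by (auto simp: J_def \<delta>_def dist_commute)
  have JI: "J \<subseteq> {0..1}" by (auto simp: J_def)
  have Jconv: "convex J" unfolding J_def by (intro convex_Int convex_ball) simp
  define U' where "U' = (\<lambda>i::nat. if i = 0 then J else if i = 1 then J else U)"
  define V' where "V' = (\<lambda>i::nat. if i = 0 then {0..1} \<inter> {..<\<epsilon>} else if i = 1 then {0..1} \<inter> {1-\<epsilon><..} else V)"
  have o1: "openin (top_of_set {0..1}) ({0..1} \<inter> {..<\<epsilon>})" by (rule openin_open_Int) simp
  have o2: "openin (top_of_set {0..1}) ({0..1::real} \<inter> {1-\<epsilon><..})" by (rule openin_open_Int) simp
  have "(0::real) \<in> {0..1} \<inter> {..<\<epsilon>}" using e by auto
  then have n1: "({0..1::real} \<inter> {..<\<epsilon>}) \<noteq> {}" by blast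
  have "(1::real) \<in> {0..1} \<inter> {1-\<epsilon><..}" using e by auto
  then have n2: "({0..1::real} \<inter> {1-\<epsilon><..}) \<noteq> {}" by blast
  have "\<forall>i<3. openin (top_of_set {0..1}) (U' i) \<and> U' i \<noteq> {} \<and> openin (top_of_set {0..1}) (V' i) \<and> V' i \<noteq> {}"
    using J_open xJ U V o1 o2 n1 n2 by (auto simp: U'_def V'_def)
  then obtain n where n: "n \<ge> 1" "\<forall>i<3. iter_comp f n ` U' i \<inter> V' i \<noteq> {}"
    using wm3 unfolding weakly_mixing_order_def by blast
  from n(2)[rule_format, of 0] obtain a where a: "a \<in> J" "iter_comp f n a < \<epsilon>"
    by (auto simp: U'_def V'_def)
  from n(2)[rule_format, of 1] obtain b where b: "b \<in> J" "iter_comp f n b > 1 - \<epsilon>"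
    by (auto simp: U'_def V'_def)
  have hit: "iter_comp f n ` U \<inter> V \<noteq> {}" using n(2)[rule_format, of 2] by (simp add: U'_def V'_def)
  have nN: "n > N"
  proof (rule ccontr)
    assume "\<not> N < n" then have nle: "n \<le> N" by simp
    have "a \<in> {0..1}" "dist a x < \<delta>1" using a(1) by (auto simp: J_def \<delta>_def dist_commute)
    then have da: "dist (iter_comp f n a) (iter_comp f n x) < 1/4" using d1(2) nle by blast
    have "b \<in> {0..1}" "dist b x < \<delta>1" using b(1) by (auto simp: J_def \<delta>_def dist_commute)
    then have db: "dist (iter_comp f n b) (iter_comp f n x) < 1/4" using d1(2) nle by blast
    show False using da db a(2) b(2) e unfolding dist_real_def abs_less_iff by linarith
  qed
  have cov: "{\<epsilon>..1-\<epsilon>} \<subseteq> iter_comp f n ` W"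
  proof
    fix t assume t: "t \<in> {\<epsilon>..1-\<epsilon>}"
    have "t \<in> closed_segment (iter_comp f n a) (iter_comp f n b)"
      using a b t by (auto simp: closed_segment_eq_real_ivl)
    moreover have seg: "closed_segment a b \<subseteq> J" using a(1) b(1) Jconv by (rule closed_segment_subset)
    then have "continuous_on (closed_segment a b) (iter_comp f n)"
      using G_cont JI continuous_on_subset by (meson order_trans)
    ultimately obtain z where "z \<in> closed_segment a b" "iter_comp f n z = t"
      using IVT'_closed_segment_real by blast
    then show "t \<in> iter_comp f n ` W" using seg JW by blast
  qed
  show ?thesis using nN cov hit by blast
qed


lemma refine:
  assumes wm3: "weakly_mixing_order (top_of_set {0..1}) (iter_comp f) 3"
   and fin: "finite \<U>" and op: "\<forall>U\<in>\<U>. openin (top_of_set {0..1}) U \<and> U \<noteq> {}"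
  shows "\<exists>W n0. openin (top_of_set {0..1}) W \<and> W \<noteq> {} \<and> n0 \<ge> N \<and>
           (\<forall>U\<in>\<U>. \<forall>n\<ge>n0. iter_comp f n ` W \<subseteq> iter_comp f n ` U)"
  using fin op
proof (induction \<U> rule: finite_induct)
  case empty
  show ?case by (intro exI[of _ "{0..1::real}"] exI[of _ N]) auto
next
  case (insert U \<U>)
  then obtain W n0 where W: "openin (top_of_set {0..1}) W" "W \<noteq> {}" "n0 \<ge> N"
    "\<forall>U\<in>\<U>. \<forall>n\<ge>n0. iter_comp f n ` W \<subseteq> iter_comp f n ` U" by auto
  have U: "openin (top_of_set {0..1}) U" "U \<noteq> {}" using insert.prems by auto
  define V where "V = {0..1} \<inter> {1/8<..<7/8::real}"
  have V: "openin (top_of_set {0..1}) V" unfolding V_def by (rule openin_open_Int) simp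
  have "(1/2::real) \<in> V" by (simp add: V_def)
  then have Vne: "V \<noteq> {}" by blast
  obtain n1 where n1: "n1 > n0" "{1/8..1-1/8} \<subseteq> iter_comp f n1 ` W" "iter_comp f n1 ` U \<inter> V \<noteq> {}"
    using cover1[OF wm3 W(1,2) U V Vne, of "1/8" n0] by auto
  obtain y where y: "y \<in> U" "iter_comp f n1 y \<in> V" using n1(3) by blast
  obtain r where r: "r > 0" "\<forall>x'\<in>{0..1}. dist x' y < r \<longrightarrow> x' \<in> U"
    using U(1) y(1) unfolding openin_euclidean_subtopology_iff by blast
  have yI: "y \<in> {0..1}" using U(1) y(1) openin_imp_subset by blast
  define B where "B = {0..1} \<inter> ball y r"
  have B_open: "openin (top_of_set {0..1}) B" unfolding B_def by (rule openin_open_Int) simp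
  have yB: "y \<in> B" using yI r by (simp add: B_def)
  then have B_ne: "B \<noteq> {}" by blast
  have BU: "B \<subseteq> U" using r by (auto simp: B_def dist_commute)
  have BI: "B \<subseteq> {0..1}" by (auto simp: B_def)
  have Bconv: "convex B" unfolding B_def by (intro convex_Int convex_ball) simp
  have nonconst: "\<exists>z\<in>B. iter_comp f n1 z \<noteq> iter_comp f n1 y"
  proof (rule ccontr)
    assume "\<not> (\<exists>z\<in>B. iter_comp f n1 z \<noteq> iter_comp f n1 y)"
    then have "iter_comp f n1 ` B \<subseteq> iter_comp f n1 ` {y}" by auto
    then have all: "\<forall>n\<ge>n1. iter_comp f n ` B \<subseteq> iter_comp f n ` {y}" using G_img_mono by blast
    obtain n where nn: "n > n1" "{1/8..1-1/8} \<subseteq> iter_comp f n ` B"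
      using cover1[OF wm3 B_open B_ne B_open B_ne B_open B_ne, where \<epsilon>="1/8::real" and N=n1] by auto
    have "iter_comp f n ` B \<subseteq> {iter_comp f n y}" using all nn(1) by auto
    then have "{1/8..1-1/8::real} \<subseteq> {iter_comp f n y}" using nn(2) by blast
    moreover have "(1/8::real) \<in> {1/8..1-1/8}" "(7/8::real) \<in> {1/8..1-1/8}" by auto
    ultimately have "1/8 = iter_comp f n y" "7/8 = iter_comp f n y" by blast+
    then show False by simp
  qed
  then obtain z where z: "z \<in> B" "iter_comp f n1 z \<noteq> iter_comp f n1 y" by blast
  define p where "p = iter_comp f n1 y"
  define q where "q = iter_comp f n1 z"
  have pV: "1/8 < p" "p < 7/8" using y(2) by (auto simp: V_def p_def)
  have conn: "connected (iter_comp f n1 ` B)"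
    by (rule connected_continuous_image) (use G_cont BI continuous_on_subset convex_connected Bconv in blast)+
  have pS: "p \<in> iter_comp f n1 ` B" using yB by (simp add: p_def)
  have qS: "q \<in> iter_comp f n1 ` B" using z by (simp add: q_def)
  have pq: "p \<noteq> q" using z by (simp add: p_def q_def)
  obtain c d where cd: "c < d" "{c<..<d} \<subseteq> iter_comp f n1 ` B" "{c<..<d} \<subseteq> {1/8<..<7/8::real}"
  proof (cases "p < q")
    case True
    show ?thesis
    proof (rule that[of p "min q (7/8)"])
      show "p < min q (7/8)" using True pV by simp
      show "{p<..<min q (7/8)} \<subseteq> iter_comp f n1 ` B"
      proof
        fix t assume "t \<in> {p<..<min q (7/8)}"
        then have "p \<le> t" "t \<le> q" by auto
        then show "t \<in> iter_comp f n1 ` B" by (rule connectedD_interval[OF conn pS qS])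
      qed
      show "{p<..<min q (7/8)} \<subseteq> {1/8<..<7/8::real}" using pV by auto
    qed
  next
    case False
    then have qp: "q < p" using pq by simp
    show ?thesis
    proof (rule that[of "max q (1/8)" p])
      show "max q (1/8) < p" using qp pV by simp
      show "{max q (1/8)<..<p} \<subseteq> iter_comp f n1 ` B"
      proof
        fix t assume "t \<in> {max q (1/8)<..<p}"
        then have "q \<le> t" "t \<le> p" by auto
        then show "t \<in> iter_comp f n1 ` B" by (rule connectedD_interval[OF conn qS pS])
      qed
      show "{max q (1/8)<..<p} \<subseteq> {1/8<..<7/8::real}" using pV by auto
    qed
  qed
  define W' where "W' = W \<inter> ({0..1} \<inter> iter_comp f n1 -` {c<..<d})"
  have W'_open: "openin (top_of_set {0..1}) W'" unfolding W'_def
    by (intro openin_Int W(1) continuous_openin_preimage_gen G_cont) simp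
  have "(c+d)/2 \<in> {c<..<d}" using cd(1) by simp
  then have "(c+d)/2 \<in> {1/8<..<7/8::real}" using cd(3) by blast
  then have "(c+d)/2 \<in> {1/8..1-1/8::real}" by auto
  then have "(c+d)/2 \<in> iter_comp f n1 ` W" using n1(2) by blast
  then obtain w where w: "w \<in> W" "iter_comp f n1 w = (c+d)/2" by (metis imageE)
  have "w \<in> {0..1}" using W(1) w(1) openin_imp_subset by blast
  then have "w \<in> W'" using w cd(1) by (simp add: W'_def)
  then have W'_ne: "W' \<noteq> {}" by blast
  have "iter_comp f n1 ` W' \<subseteq> iter_comp f n1 ` U"
  proof -
    have "iter_comp f n1 ` W' \<subseteq> {c<..<d}" by (auto simp: W'_def)
    also have "\<dots> \<subseteq> iter_comp f n1 ` B" by (rule cd(2))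
    also have "\<dots> \<subseteq> iter_comp f n1 ` U" using BU by (rule image_mono)
    finally show ?thesis .
  qed
  then have newU: "\<forall>n\<ge>n1. iter_comp f n ` W' \<subseteq> iter_comp f n ` U" using G_img_mono by blast
  have oldU: "\<forall>U'\<in>\<U>. \<forall>n\<ge>n1. iter_comp f n ` W' \<subseteq> iter_comp f n ` U'"
  proof (intro ballI allI impI)
    fix U' n assume "U' \<in> \<U>" "n1 \<le> n"
    then have "iter_comp f n ` W \<subseteq> iter_comp f n ` U'" using W(4) n1(1) by auto
    moreover have "iter_comp f n ` W' \<subseteq> iter_comp f n ` W" by (auto simp: W'_def)
    ultimately show "iter_comp f n ` W' \<subseteq> iter_comp f n ` U'" by blast
  qed
  show ?case
  proof (intro exI[of _ W'] exI[of _ n1] conjI)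
    show "N \<le> n1" using W(3) n1(1) by simp
    show "\<forall>U'\<in>insert U \<U>. \<forall>n\<ge>n1. iter_comp f n ` W' \<subseteq> iter_comp f n ` U'"
      using newU oldU by blast
  qed (use W'_open W'_ne in auto)
qed

lemma cover_all:
  assumes wm3: "weakly_mixing_order (top_of_set {0..1}) (iter_comp f) 3"
   and fin: "finite \<U>" and op: "\<forall>U\<in>\<U>. openin (top_of_set {0..1}) U \<and> U \<noteq> {}"
   and e: "0 < \<epsilon>" "\<epsilon> < 1/4"
  shows "\<exists>n\<ge>1. \<forall>U\<in>\<U>. {\<epsilon>..1-\<epsilon>} \<subseteq> iter_comp f n ` U"
proof -
  obtain W n0 where W: "openin (top_of_set {0..1}) W" "W \<noteq> {}"
    "\<forall>U\<in>\<U>. \<forall>n\<ge>n0. iter_comp f n ` W \<subseteq> iter_comp f n ` U"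
    using refine[OF wm3 fin op, of 0] by auto
  have I: "openin (top_of_set {0..1}) {0..1::real}" "{0..1::real} \<noteq> {}" by auto
  obtain n where n: "n > n0" "{\<epsilon>..1-\<epsilon>} \<subseteq> iter_comp f n ` W"
    using cover1[OF wm3 W(1,2) I I e, of n0] by auto
  show ?thesis
  proof (intro exI[of _ n] conjI ballI)
    show "1 \<le> n" using n(1) by simp
    fix U assume "U \<in> \<U>"
    then have "iter_comp f n ` W \<subseteq> iter_comp f n ` U" using W(3) n(1) by simp
    then show "{\<epsilon>..1-\<epsilon>} \<subseteq> iter_comp f n ` U" using n(2) by blast
  qed
qed

end



lemma nbhd_all:
  fixes m :: nat
  assumes "\<forall>i<m. nbhd_ok (Q i) (\<mu> i)"
  shows "\<exists>(\<Phi>::(real\<Rightarrow>real) set) (r::real). finite \<Phi> \<and> (\<forall>\<phi>\<in>\<Phi>. continuous_on {0..1} \<phi>) \<and> r > 0 \<and>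
    (\<forall>i<m. \<forall>\<nu>\<in>prob_measures_I. (\<forall>\<phi>\<in>\<Phi>. \<bar>(\<integral>x. \<phi> x \<partial>\<nu>) - (\<integral>x. \<phi> x \<partial>\<mu> i)\<bar> < r) \<longrightarrow> \<nu> \<in> Q i)"
  using assms
proof (induction m)
  case 0
  show ?case by (intro exI[of _ "{}"] exI[of _ "1::real"]) simp
next
  case (Suc m)
  then obtain \<Phi> :: "(real\<Rightarrow>real) set" and r :: real where 1: "finite \<Phi>" "\<forall>\<phi>\<in>\<Phi>. continuous_on {0..1} \<phi>" "r > 0"
    "\<forall>i<m. \<forall>\<nu>\<in>prob_measures_I. (\<forall>\<phi>\<in>\<Phi>. \<bar>(\<integral>x. \<phi> x \<partial>\<nu>) - (\<integral>x. \<phi> x \<partial>\<mu> i)\<bar> < r) \<longrightarrow> \<nu> \<in> Q i"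
    by auto
  have "nbhd_ok (Q m) (\<mu> m)" using Suc.prems by simp
  then obtain F :: "(real\<Rightarrow>real) set" and s :: real where 2: "finite F" "\<forall>\<phi>\<in>F. continuous_on {0..1} \<phi>" "s > 0"
    "\<forall>\<nu>\<in>prob_measures_I. (\<forall>\<phi>\<in>F. \<bar>(\<integral>x. \<phi> x \<partial>\<nu>) - (\<integral>x. \<phi> x \<partial>\<mu> m)\<bar> < s) \<longrightarrow> \<nu> \<in> Q m"
    unfolding nbhd_ok_def by blast
  have "\<forall>i<Suc m. \<forall>\<nu>\<in>prob_measures_I. (\<forall>\<phi>\<in>\<Phi> \<union> F. \<bar>(\<integral>x. \<phi> x \<partial>\<nu>) - (\<integral>x. \<phi> x \<partial>\<mu> i)\<bar> < min r s) \<longrightarrow> \<nu> \<in> Q i"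
  proof (intro allI impI ballI)
    fix i \<nu> assume i: "i < Suc m" and n: "\<nu> \<in> prob_measures_I"
      and h: "\<forall>\<phi>\<in>\<Phi> \<union> F. \<bar>(\<integral>x. \<phi> x \<partial>\<nu>) - (\<integral>x. \<phi> x \<partial>\<mu> i)\<bar> < min r s"
    show "\<nu> \<in> Q i"
    proof (cases "i = m")
      case True
      then show ?thesis using 2(4) n h by simp
    next
      case False
      then have "i < m" using i by simp
      then show ?thesis using 1(4) n h by simp
    qed
  qed
  moreover have "finite (\<Phi> \<union> F)" "\<forall>\<phi>\<in>\<Phi> \<union> F. continuous_on {0..1} \<phi>" "min r s > 0"
    using 1 2 by auto
  ultimately show ?case by (intro exI[of _ "\<Phi> \<union> F"] exI[of _ "min r s"] conjI) simp_all
qed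

lemma unif_finite:
  fixes \<Phi> :: "(real \<Rightarrow> real) set"
  assumes "finite \<Phi>" "\<forall>\<phi>\<in>\<Phi>. continuous_on {0..1} \<phi>" "e > 0"
  shows "\<exists>\<delta>>0. \<forall>\<phi>\<in>\<Phi>. \<forall>x\<in>{0..1}. \<forall>y\<in>{0..1}. \<bar>x - y\<bar> < \<delta> \<longrightarrow> \<bar>\<phi> x - \<phi> y\<bar> < e"
  using assms(1,2)
proof (induction \<Phi> rule: finite_induct)
  case empty
  show ?case by (intro exI[of _ "1::real"]) simp
next
  case (insert \<phi> \<Phi>)
  then obtain \<delta>1 where d1: "\<delta>1 > 0" "\<forall>\<phi>\<in>\<Phi>. \<forall>x\<in>{0..1}. \<forall>y\<in>{0..1}. \<bar>x - y\<bar> < \<delta>1 \<longrightarrow> \<bar>\<phi> x - \<phi> y\<bar> < e"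
    by auto
  have "uniformly_continuous_on {0..1} \<phi>"
    using insert.prems by (intro compact_uniformly_continuous) auto
  then obtain \<delta>2 where d2: "\<delta>2 > 0" "\<forall>x\<in>{0..1}. \<forall>x'\<in>{0..1}. dist x' x < \<delta>2 \<longrightarrow> dist (\<phi> x') (\<phi> x) < e"
    unfolding uniformly_continuous_on_def using assms(3) by blast
  show ?case
  proof (intro exI[of _ "min \<delta>1 \<delta>2"] conjI ballI impI)
    show "0 < min \<delta>1 \<delta>2" using d1 d2 by simp
    fix \<psi> x y assume p: "\<psi> \<in> insert \<phi> \<Phi>" and x: "x \<in> {0..1}" and y: "y \<in> {0..1}"
      and xy: "\<bar>x - y\<bar> < min \<delta>1 \<delta>2"
    show "\<bar>\<psi> x - \<psi> y\<bar> < e"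
    proof (cases "\<psi> = \<phi>")
      case True
      then show ?thesis using d2(2) x y xy by (auto simp: dist_real_def)
    next
      case False
      then show ?thesis using d1(2) p x y xy by auto
    qed
  qed
qed

lemma distr_pair_snd_prob:
  assumes "prob_space M" "prob_space N"
  shows "distr (M \<Otimes>\<^sub>M N) N snd = N"
proof (intro measure_eqI)
  show "sets (distr (M \<Otimes>\<^sub>M N) N snd) = sets N" by simp
  fix A assume A: "A \<in> sets (distr (M \<Otimes>\<^sub>M N) N snd)"
  then have A': "A \<in> sets N" by simp
  have "emeasure (distr (M \<Otimes>\<^sub>M N) N snd) A = emeasure (M \<Otimes>\<^sub>M N) (space M \<times> A)"
    using A' by (auto simp add: emeasure_distr space_pair_measure dest: sets.sets_into_space intro!: arg_cong2[where f=emeasure])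
  also have "\<dots> = emeasure M (space M) * emeasure N A"
    using sigma_finite_measure.emeasure_pair_measure_Times[OF prob_space_imp_sigma_finite[OF assms(2)] sets.top A'] .
  also have "\<dots> = emeasure N A" using prob_space.emeasure_space_1[OF assms(1)] by simp
  finally show "emeasure (distr (M \<Otimes>\<^sub>M N) N snd) A = emeasure N A" .
qed

lemma int_close:
  fixes f g :: "'a \<Rightarrow> real"
  assumes "prob_space M" "f \<in> borel_measurable M" "g \<in> borel_measurable M"
    "\<forall>z\<in>space M. \<bar>f z\<bar> \<le> B" "\<forall>z\<in>space M. \<bar>g z\<bar> \<le> B"
    "\<forall>z\<in>space M. \<bar>f z - g z\<bar> \<le> c"
  shows "\<bar>(\<integral>z. f z \<partial>M) - (\<integral>z. g z \<partial>M)\<bar> \<le> c"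
proof -
  interpret prob_space M by fact
  have fi: "integrable M f" using assms(2,4) by (intro integrable_const_bound[where B=B]) auto
  have gi: "integrable M g" using assms(3,5) by (intro integrable_const_bound[where B=B]) auto
  have "(\<integral>z. f z \<partial>M) - (\<integral>z. g z \<partial>M) = (\<integral>z. f z - g z \<partial>M)"
    using Bochner_Integration.integral_diff[OF fi gi] by simp
  also have "\<bar>\<dots>\<bar> \<le> (\<integral>z. \<bar>f z - g z\<bar> \<partial>M)"
    using integral_norm_bound[of M "\<lambda>z. f z - g z"] by simp
  also have "\<dots> \<le> (\<integral>z. c \<partial>M)"
    by (rule integral_mono) (use fi gi assms(6) in auto)
  also have "\<dots> = c" by (simp add: prob_space)
  finally show ?thesis .
qed

lemma cont_meas_I:
  fixes \<phi> :: "real \<Rightarrow> real"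
  assumes "continuous_on {0..1} \<phi>"
  shows "\<phi> \<in> borel_measurable borel_I"
  unfolding borel_I_def by (rule borel_measurable_continuous_on_restrict[OF assms])

lemma cont_bdd_I:
  fixes \<phi> :: "real \<Rightarrow> real"
  assumes "continuous_on {0..1} \<phi>"
  shows "\<exists>B. \<forall>x\<in>{0..1}. \<bar>\<phi> x\<bar> \<le> B"
proof -
  have "compact (\<phi> ` {0..1})" by (rule compact_continuous_image[OF assms]) simp
  then have "bounded (\<phi> ` {0..1})" by (rule compact_imp_bounded)
  then show ?thesis unfolding bounded_iff by auto
qed

lemma space_borel_I: "space borel_I = {0..1}"
  by (simp add: borel_I_def space_restrict_space)

lemma prob_I_space: "\<mu> \<in> prob_measures_I \<Longrightarrow> space \<mu> = {0..1}"
  unfolding prob_measures_I_def using sets_eq_imp_space_eq space_borel_I by auto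




lemma main_lemma:
  fixes f :: "nat \<Rightarrow> real \<Rightarrow> real" and m :: nat and U V :: "nat \<Rightarrow> real measure set"
  assumes cont: "\<And>n. continuous_on {0..1} (f n)"
    and self: "\<And>n. f n ` {0..1} \<subseteq> {0..1}"
    and wm3: "weakly_mixing_order (top_of_set {0..1}) (iter_comp f) 3"
    and UV: "\<forall>i<m. openin weak_star_topology_I (U i) \<and> U i \<noteq> {} \<and> openin weak_star_topology_I (V i) \<and> V i \<noteq> {}"
  shows "\<exists>n\<ge>1. \<forall>i<m. induced_map (iter_comp f n) ` U i \<inter> V i \<noteq> {}"
proof -
  define \<mu> where "\<mu> i = (SOME x. x \<in> U i)" for i
  define \<nu> where "\<nu> i = (SOME x. x \<in> V i)" for i
  have \<mu>U: "\<forall>i<m. \<mu> i \<in> U i" using UV unfolding \<mu>_def by (simp add: some_in_eq)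
  have \<nu>V: "\<forall>i<m. \<nu> i \<in> V i" using UV unfolding \<nu>_def by (simp add: some_in_eq)
  have \<mu>P: "\<forall>i<m. \<mu> i \<in> prob_measures_I" using \<mu>U UV weak_open_nbhd(1) by blast
  have \<nu>P: "\<forall>i<m. \<nu> i \<in> prob_measures_I" using \<nu>V UV weak_open_nbhd(1) by blast
  have "\<forall>i<m. nbhd_ok (U i) (\<mu> i)" using \<mu>U UV weak_open_nbhd(2) by blast
  from nbhd_all[OF this] obtain \<Phi>U :: "(real\<Rightarrow>real) set" and rU :: real where
    PU: "finite \<Phi>U" "\<forall>\<phi>\<in>\<Phi>U. continuous_on {0..1} \<phi>" "rU > 0"
    "\<forall>i<m. \<forall>\<nu>'\<in>prob_measures_I. (\<forall>\<phi>\<in>\<Phi>U. \<bar>(\<integral>x. \<phi> x \<partial>\<nu>') - (\<integral>x. \<phi> x \<partial>\<mu> i)\<bar> < rU) \<longrightarrow> \<nu>' \<in> U i"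
    by blast
  have "\<forall>i<m. nbhd_ok (V i) (\<nu> i)" using \<nu>V UV weak_open_nbhd(2) by blast
  from nbhd_all[OF this] obtain \<Phi>V :: "(real\<Rightarrow>real) set" and rV :: real where
    PV: "finite \<Phi>V" "\<forall>\<phi>\<in>\<Phi>V. continuous_on {0..1} \<phi>" "rV > 0"
    "\<forall>i<m. \<forall>\<nu>'\<in>prob_measures_I. (\<forall>\<phi>\<in>\<Phi>V. \<bar>(\<integral>x. \<phi> x \<partial>\<nu>') - (\<integral>x. \<phi> x \<partial>\<nu> i)\<bar> < rV) \<longrightarrow> \<nu>' \<in> V i"
    by blast
  define \<Phi> where "\<Phi> = \<Phi>U \<union> \<Phi>V"
  define r where "r = min rU rV"
  have r0: "r > 0" using PU PV by (simp add: r_def)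
  have \<Phi>fin: "finite \<Phi>" and \<Phi>cont: "\<forall>\<phi>\<in>\<Phi>. continuous_on {0..1} \<phi>" using PU PV by (auto simp: \<Phi>_def)
  obtain \<delta> where \<delta>: "\<delta> > 0" "\<forall>\<phi>\<in>\<Phi>. \<forall>x\<in>{0..1}. \<forall>y\<in>{0..1}. \<bar>x - y\<bar> < \<delta> \<longrightarrow> \<bar>\<phi> x - \<phi> y\<bar> < r/2"
    using unif_finite[OF \<Phi>fin \<Phi>cont, of "r/2"] r0 by auto
  obtain K :: nat where K: "3/\<delta> + 5 \<le> real K" using real_arch_simple by blast
  have K4: "real K > 4" using K \<delta> by (smt (verit) divide_pos_pos)
  have K\<delta>: "3 < real K * \<delta>"
  proof -
    have "3/\<delta> < real K" using K \<delta> by linarith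
    then show ?thesis using \<delta>(1) by (simp add: divide_less_eq mult.commute)
  qed
  define \<epsilon> where "\<epsilon> = 1 / real K"
  have \<epsilon>0: "0 < \<epsilon>" "\<epsilon> < 1/4" using K4 by (auto simp: \<epsilon>_def field_simps)
  have \<epsilon>\<delta>: "2 * \<epsilon> < \<delta>" using K\<delta> K4 by (simp add: \<epsilon>_def field_simps)
  define p where "p x = real_of_int \<lfloor>real K * x\<rfloor> / real K" for x
  have p_le: "p x \<le> x" and p_gt: "x < p x + \<epsilon>" for x
  proof -
    have "real_of_int \<lfloor>real K * x\<rfloor> \<le> real K * x" "real K * x < real_of_int \<lfloor>real K * x\<rfloor> + 1"
      by linarith+
    then show "p x \<le> x" "x < p x + \<epsilon>" using K4 by (auto simp: p_def \<epsilon>_def field_simps)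
  qed
  have p_ge: "0 \<le> p x" if "0 \<le> x" for x
    using that K4 by (simp add: p_def)
  have pI: "p x \<in> {0..1}" if "x \<in> {0..1}" for x using that p_le[of x] p_ge[of x] by auto
  define A where "A = p ` {0..1}"
  have Asub: "A \<subseteq> (\<lambda>j. real_of_int j / real K) ` {0..int K}"
  proof
    fix a assume "a \<in> A"
    then obtain x where x: "x \<in> {0..1}" "a = p x" by (auto simp: A_def)
    have "0 \<le> \<lfloor>real K * x\<rfloor>" using x by simp
    moreover have "\<lfloor>real K * x\<rfloor> \<le> int K"
    proof -
      have "real K * x \<le> real K" using x by (simp add: mult_left_le)
      then show ?thesis by (metis floor_mono floor_of_nat)
    qed
    ultimately show "a \<in> (\<lambda>j. real_of_int j / real K) ` {0..int K}" using x by (auto simp: p_def)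
  qed
  have Afin: "finite A" by (rule finite_subset[OF Asub]) simp
  have AI: "A \<subseteq> {0..1}" using pI by (auto simp: A_def)
  define q where "q y = max \<epsilon> (min (1-\<epsilon>) (p y))" for y
  have qE: "q y \<in> {\<epsilon>..1-\<epsilon>}" for y using \<epsilon>0 by (auto simp: q_def)
  have q_close: "\<bar>q y - y\<bar> < \<delta>" if "y \<in> {0..1}" for y
  proof -
    have "\<bar>q y - y\<bar> < 2 * \<epsilon>"
      using p_le[of y] p_gt[of y] that \<epsilon>0 by (auto simp: q_def max_def min_def)
    then show ?thesis using \<epsilon>\<delta> by linarith
  qed
  define T where "T = q ` {0..1}"
  have Tfin: "finite T"
  proof -
    have "T \<subseteq> (\<lambda>a. max \<epsilon> (min (1-\<epsilon>) a)) ` A" by (auto simp: T_def A_def q_def)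
    then show ?thesis using Afin finite_subset by blast
  qed
  have TE: "T \<subseteq> {\<epsilon>..1-\<epsilon>}" using qE by (auto simp: T_def)
  define \<U> where "\<U> = (\<lambda>a. {0..1} \<inter> ball a \<epsilon>) ` A"
  have \<U>fin: "finite \<U>" using Afin by (simp add: \<U>_def)
  have \<U>op: "\<forall>W\<in>\<U>. openin (top_of_set {0..1}) W \<and> W \<noteq> {}"
  proof
    fix W assume "W \<in> \<U>"
    then obtain a where a: "a \<in> A" "W = {0..1} \<inter> ball a \<epsilon>" by (auto simp: \<U>_def)
    have "openin (top_of_set {0..1}) W" unfolding a(2) by (rule openin_open_Int) simp
    moreover have "a \<in> W" using a AI \<epsilon>0 by auto
    ultimately show "openin (top_of_set {0..1}) W \<and> W \<noteq> {}" by blast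
  qed
  obtain n where n1: "n \<ge> 1" and ncov: "\<forall>W\<in>\<U>. {\<epsilon>..1-\<epsilon>} \<subseteq> iter_comp f n ` W"
    using cover_all[OF cont self wm3 \<U>fin \<U>op \<epsilon>0] by blast
  define s where "s a t = (SOME z. z \<in> {0..1} \<inter> ball a \<epsilon> \<and> iter_comp f n z = t)" for a t
  have s_prop: "s a t \<in> {0..1} \<inter> ball a \<epsilon> \<and> iter_comp f n (s a t) = t"
    if "a \<in> A" "t \<in> {\<epsilon>..1-\<epsilon>}" for a t
  proof -
    have "{0..1} \<inter> ball a \<epsilon> \<in> \<U>" using that by (auto simp: \<U>_def)
    then have "t \<in> iter_comp f n ` ({0..1} \<inter> ball a \<epsilon>)" using ncov that by blast
    then have "\<exists>z. z \<in> {0..1} \<inter> ball a \<epsilon> \<and> iter_comp f n z = t" by blast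
    then show ?thesis unfolding s_def by (rule someI_ex)
  qed
  define H where "H z = s (p (fst z)) (q (snd z))" for z
  have H_prop: "H (x,y) \<in> {0..1} \<and> \<bar>H (x,y) - x\<bar> < \<delta> \<and> iter_comp f n (H (x,y)) = q y"
    if "x \<in> {0..1}" "y \<in> {0..1}" for x y
  proof -
    have pa: "p x \<in> A" using that by (auto simp: A_def)
    from s_prop[OF pa qE[of y]] have sp: "s (p x) (q y) \<in> {0..1}" "dist (p x) (s (p x) (q y)) < \<epsilon>"
      "iter_comp f n (s (p x) (q y)) = q y" by auto
    have "\<bar>s (p x) (q y) - x\<bar> < 2 * \<epsilon>"
      using sp(2) p_le[of x] p_gt[of x] by (auto simp: dist_real_def)
    then show ?thesis using sp \<epsilon>\<delta> by (simp add: H_def)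
  qed
  have p_bor: "p \<in> borel_measurable borel" unfolding p_def[abs_def] by measurable
  have q_bor: "q \<in> borel_measurable borel" unfolding q_def[abs_def] using p_bor by measurable
  have p_borI: "p \<in> borel_measurable borel_I" unfolding borel_I_def by (rule measurable_restrict_space1[OF p_bor])
  have q_borI: "q \<in> borel_measurable borel_I" unfolding borel_I_def by (rule measurable_restrict_space1[OF q_bor])
  have p_cnt: "p \<in> measurable borel_I (count_space A)"
    unfolding measurable_count_space_eq2[OF Afin]
  proof
    show "p \<in> space borel_I \<rightarrow> A" by (auto simp: space_borel_I A_def)
    show "\<forall>a\<in>A. p -` {a} \<inter> space borel_I \<in> sets borel_I"
      using measurable_sets[OF p_borI] by simp
  qed
  have q_cnt: "q \<in> measurable borel_I (count_space T)"
    unfolding measurable_count_space_eq2[OF Tfin]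
  proof
    show "q \<in> space borel_I \<rightarrow> T" by (auto simp: space_borel_I T_def)
    show "\<forall>a\<in>T. q -` {a} \<inter> space borel_I \<in> sets borel_I"
      using measurable_sets[OF q_borI] by simp
  qed
  have PQ: "(\<lambda>z. (p (fst z), q (snd z))) \<in> measurable (borel_I \<Otimes>\<^sub>M borel_I) (count_space A \<Otimes>\<^sub>M count_space T)"
    by (intro measurable_Pair measurable_compose[OF measurable_fst p_cnt] measurable_compose[OF measurable_snd q_cnt])
  have cnt_eq: "count_space A \<Otimes>\<^sub>M count_space T = count_space (A \<times> T)"
    using Afin Tfin by (intro pair_measure_countable countable_finite)
  have s_meas: "(\<lambda>(a,t). s a t) \<in> measurable (count_space (A \<times> T)) borel_I"
    unfolding measurable_count_space_eq1
  proof
    fix z assume "z \<in> A \<times> T"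
    then obtain a t where z: "z = (a,t)" "a \<in> A" "t \<in> T" by blast
    then have "s a t \<in> {0..1}" using s_prop[of a t] TE by blast
    then show "(case z of (a, t) \<Rightarrow> s a t) \<in> space borel_I" using z by (simp add: space_borel_I)
  qed
  have H_eq: "H = (\<lambda>(a,t). s a t) \<circ> (\<lambda>z. (p (fst z), q (snd z)))" by (auto simp: H_def fun_eq_iff)
  have H_meas: "H \<in> measurable (borel_I \<Otimes>\<^sub>M borel_I) borel_I"
    unfolding H_eq by (rule measurable_comp[OF PQ[unfolded cnt_eq] s_meas])
  have G_meas: "iter_comp f n \<in> measurable borel_I borel_I"
  proof -
    have "iter_comp f n \<in> borel_measurable borel_I"
      unfolding borel_I_def by (rule borel_measurable_continuous_on_restrict[OF G_cont[OF cont self]])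
    then show ?thesis unfolding borel_I_def
      by (intro measurable_restrict_space2) (auto simp: space_restrict_space intro: G_self[OF cont self])
  qed
  have main_i: "induced_map (iter_comp f n) ` U i \<inter> V i \<noteq> {}" if i: "i < m" for i
  proof -
    define M where "M = \<mu> i \<Otimes>\<^sub>M \<nu> i"
    have mp: "prob_space (\<mu> i)" "sets (\<mu> i) = sets borel_I" using \<mu>P i by (auto simp: prob_measures_I_def)
    have np: "prob_space (\<nu> i)" "sets (\<nu> i) = sets borel_I" using \<nu>P i by (auto simp: prob_measures_I_def)
    have setsM: "sets M = sets (borel_I \<Otimes>\<^sub>M borel_I)" unfolding M_def
      by (rule sets_pair_measure_cong[OF mp(2) np(2)])
    have HM: "H \<in> measurable M borel_I" using H_meas measurable_cong_sets[OF setsM refl, of borel_I] by simp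
    have probM: "prob_space M" unfolding M_def by (rule prob_space_pair[OF mp(1) np(1)])
    have spM: "space M = {0..1} \<times> {0..1}"
      using prob_I_space \<mu>P \<nu>P i by (simp add: M_def space_pair_measure)
    define S where "S = distr M borel_I H"
    have SP: "S \<in> prob_measures_I" unfolding prob_measures_I_def S_def
      using prob_space.prob_space_distr[OF probM HM] by simp
    have meas_cong: "measurable X (borel :: real measure) = measurable borel_I borel" if "sets X = sets borel_I" for X :: "real measure"
      by (rule measurable_cong_sets[OF that refl])
    have close: "\<bar>(\<integral>x. \<phi> x \<partial>S) - (\<integral>x. \<phi> x \<partial>\<mu> i)\<bar> \<le> r/2" if \<phi>: "\<phi> \<in> \<Phi>" for \<phi>
    proof -
      have c: "continuous_on {0..1} \<phi>" using \<phi> \<Phi>cont by blast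
      have \<phi>m: "\<phi> \<in> borel_measurable borel_I" by (rule cont_meas_I[OF c])
      obtain B where B: "\<forall>x\<in>{0..1}. \<bar>\<phi> x\<bar> \<le> B" using cont_bdd_I[OF c] by blast
      have i1: "(\<integral>x. \<phi> x \<partial>S) = (\<integral>z. \<phi> (H z) \<partial>M)" unfolding S_def by (rule integral_distr[OF HM \<phi>m])
      have \<phi>m2: "\<phi> \<in> borel_measurable (\<mu> i)" using \<phi>m meas_cong[OF mp(2)] by simp
      have "distr M (\<mu> i) fst = \<mu> i" unfolding M_def by (rule prob_space.distr_pair_fst[OF np(1)])
      then have i2: "(\<integral>x. \<phi> x \<partial>\<mu> i) = (\<integral>z. \<phi> (fst z) \<partial>M)"
        using integral_distr[OF _ \<phi>m2, of fst M] measurable_fst[of "\<mu> i" "\<nu> i"] by (simp add: M_def)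
      have "\<bar>(\<integral>z. \<phi> (H z) \<partial>M) - (\<integral>z. \<phi> (fst z) \<partial>M)\<bar> \<le> r/2"
      proof (rule int_close[OF probM, where B=B])
        show "(\<lambda>z. \<phi> (H z)) \<in> borel_measurable M" using measurable_compose[OF HM \<phi>m] .
        show "(\<lambda>z. \<phi> (fst z)) \<in> borel_measurable M"
          using measurable_compose[OF measurable_fst \<phi>m2] by (simp add: M_def)
        show "\<forall>z\<in>space M. \<bar>\<phi> (H z)\<bar> \<le> B" using B H_prop by (auto simp: spM)
        show "\<forall>z\<in>space M. \<bar>\<phi> (fst z)\<bar> \<le> B" using B by (auto simp: spM)
        show "\<forall>z\<in>space M. \<bar>\<phi> (H z) - \<phi> (fst z)\<bar> \<le> r/2"
        proof
          fix z assume "z \<in> space M"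
          then obtain x y where z: "z = (x,y)" "x \<in> {0..1}" "y \<in> {0..1}" by (auto simp: spM)
          then have "H (x,y) \<in> {0..1}" "\<bar>H (x,y) - x\<bar> < \<delta>" using H_prop by auto
          then have "\<bar>\<phi> (H (x,y)) - \<phi> x\<bar> < r/2" using \<delta>(2) \<phi> z(2) by blast
          then show "\<bar>\<phi> (H z) - \<phi> (fst z)\<bar> \<le> r/2" using z by simp
        qed
      qed
      then show ?thesis using i1 i2 by simp
    qed
    have SU: "S \<in> U i"
    proof -
      have "\<forall>\<phi>\<in>\<Phi>U. \<bar>(\<integral>x. \<phi> x \<partial>S) - (\<integral>x. \<phi> x \<partial>\<mu> i)\<bar> < rU"
      proof
        fix \<phi> assume "\<phi> \<in> \<Phi>U"
        then have "\<bar>(\<integral>x. \<phi> x \<partial>S) - (\<integral>x. \<phi> x \<partial>\<mu> i)\<bar> \<le> r/2" using close by (simp add: \<Phi>_def)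
        then show "\<bar>(\<integral>x. \<phi> x \<partial>S) - (\<integral>x. \<phi> x \<partial>\<mu> i)\<bar> < rU" using r0 by (simp add: r_def)
      qed
      then show ?thesis using PU(4) i SP by blast
    qed
    define R where "R = induced_map (iter_comp f n) S"
    have GS: "iter_comp f n \<in> measurable S borel_I"
      using G_meas measurable_cong_sets[of S borel_I borel_I borel_I] by (simp add: S_def)
    have R_eq: "R = distr M borel_I (iter_comp f n \<circ> H)"
      unfolding R_def induced_map_def S_def by (rule distr_distr[OF G_meas HM])
    have RP: "R \<in> prob_measures_I" unfolding prob_measures_I_def R_eq
      using prob_space.prob_space_distr[OF probM measurable_comp[OF HM G_meas]] by simp
    have close2: "\<bar>(\<integral>x. \<psi> x \<partial>R) - (\<integral>x. \<psi> x \<partial>\<nu> i)\<bar> \<le> r/2" if \<psi>: "\<psi> \<in> \<Phi>" for \<psi>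
    proof -
      have c: "continuous_on {0..1} \<psi>" using \<psi> \<Phi>cont by blast
      have \<psi>m: "\<psi> \<in> borel_measurable borel_I" by (rule cont_meas_I[OF c])
      obtain B where B: "\<forall>x\<in>{0..1}. \<bar>\<psi> x\<bar> \<le> B" using cont_bdd_I[OF c] by blast
      have i1: "(\<integral>x. \<psi> x \<partial>R) = (\<integral>z. \<psi> (iter_comp f n (H z)) \<partial>M)" unfolding R_eq
        using integral_distr[OF measurable_comp[OF HM G_meas] \<psi>m] by simp
      also have "\<dots> = (\<integral>z. \<psi> (q (snd z)) \<partial>M)"
        by (rule Bochner_Integration.integral_cong) (auto simp: spM H_prop)
      finally have i1': "(\<integral>x. \<psi> x \<partial>R) = (\<integral>z. \<psi> (q (snd z)) \<partial>M)" .
      have \<psi>m2: "\<psi> \<in> borel_measurable (\<nu> i)" using \<psi>m meas_cong[OF np(2)] by simp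
      have "distr M (\<nu> i) snd = \<nu> i" unfolding M_def by (rule distr_pair_snd_prob[OF mp(1) np(1)])
      then have i2: "(\<integral>x. \<psi> x \<partial>\<nu> i) = (\<integral>z. \<psi> (snd z) \<partial>M)"
        using integral_distr[OF _ \<psi>m2, of snd M] measurable_snd[of "\<mu> i" "\<nu> i"] by (simp add: M_def)
      have qI: "q y \<in> {0..1}" for y using qE[of y] \<epsilon>0 by auto
      have q_m: "q \<in> measurable (\<nu> i) borel_I"
      proof -
        have "q \<in> measurable borel_I borel_I" unfolding borel_I_def
          by (intro measurable_restrict_space2 measurable_restrict_space1 q_bor) (use qI in \<open>auto simp: space_restrict_space\<close>)
        then show ?thesis using measurable_cong_sets[OF np(2) refl, of borel_I] by simp
      qed
      have "\<bar>(\<integral>z. \<psi> (q (snd z)) \<partial>M) - (\<integral>z. \<psi> (snd z) \<partial>M)\<bar> \<le> r/2"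
      proof (rule int_close[OF probM, where B=B])
        show "(\<lambda>z. \<psi> (q (snd z))) \<in> borel_measurable M"
          using measurable_compose[OF measurable_compose[OF measurable_snd q_m] \<psi>m] by (simp add: M_def)
        show "(\<lambda>z. \<psi> (snd z)) \<in> borel_measurable M"
          using measurable_compose[OF measurable_snd \<psi>m2] by (simp add: M_def)
        show "\<forall>z\<in>space M. \<bar>\<psi> (q (snd z))\<bar> \<le> B" using B qI by (auto simp: spM)
        show "\<forall>z\<in>space M. \<bar>\<psi> (snd z)\<bar> \<le> B" using B by (auto simp: spM)
        show "\<forall>z\<in>space M. \<bar>\<psi> (q (snd z)) - \<psi> (snd z)\<bar> \<le> r/2"
        proof
          fix z assume "z \<in> space M"
          then obtain x y where z: "z = (x,y)" "x \<in> {0..1}" "y \<in> {0..1}" by (auto simp: spM)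
          have "\<bar>\<psi> (q y) - \<psi> y\<bar> < r/2" using \<delta>(2) \<psi> qI[of y] z(3) q_close[OF z(3)] by blast
          then show "\<bar>\<psi> (q (snd z)) - \<psi> (snd z)\<bar> \<le> r/2" using z by simp
        qed
      qed
      then show ?thesis using i1' i2 by simp
    qed
    have RV: "R \<in> V i"
    proof -
      have "\<forall>\<phi>\<in>\<Phi>V. \<bar>(\<integral>x. \<phi> x \<partial>R) - (\<integral>x. \<phi> x \<partial>\<nu> i)\<bar> < rV"
      proof
        fix \<phi> assume "\<phi> \<in> \<Phi>V"
        then have "\<bar>(\<integral>x. \<phi> x \<partial>R) - (\<integral>x. \<phi> x \<partial>\<nu> i)\<bar> \<le> r/2" using close2 by (simp add: \<Phi>_def)
        then show "\<bar>(\<integral>x. \<phi> x \<partial>R) - (\<integral>x. \<phi> x \<partial>\<nu> i)\<bar> < rV" using r0 by (simp add: r_def)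
      qed
      then show ?thesis using PV(4) i RP by blast
    qed
    show ?thesis using SU RV unfolding R_def by blast
  qed
  show ?thesis using n1 main_i by blast
qed


theorem mainTheorem5:
  fixes f :: "nat \<Rightarrow> real \<Rightarrow> real"
  assumes cont: "\<And>n. continuous_on {0..1} (f n)"
    and self: "\<And>n. f n ` {0..1} \<subseteq> {0..1}"
    and wm3: "weakly_mixing_order (top_of_set {0..1}) (iter_comp f) 3"
  shows "weakly_mixing_all_orders weak_star_topology_I (\<lambda>n. induced_map (iter_comp f n))"
  unfolding weakly_mixing_all_orders_def weakly_mixing_order_def
proof (intro allI impI)
  fix m :: nat and U V :: "nat \<Rightarrow> real measure set"
  assume "2 \<le> m"
  assume UV: "\<forall>i<m. openin weak_star_topology_I (U i) \<and> U i \<noteq> {} \<and> openin weak_star_topology_I (V i) \<and> V i \<noteq> {}"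
  show "\<exists>n\<ge>1. \<forall>i<m. (\<lambda>n. induced_map (iter_comp f n)) n ` U i \<inter> V i \<noteq> {}"
    using main_lemma[OF cont self wm3 UV] by simp
qed

end
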